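(* Let $G$ be a finite group and $N\unlhd G$ a normal subgroup. If $G$ is almost monomial, then the quotient group $G/N$ is almost monomial.
   Context: A finite group $G$ is called almost monomial if for every two distinct complex irreducible characters $\chi$ and $\psi$ of $G$ there exist a subgroup $H\le G$ and a linear (degree one) character $\varphi$ of $H$ such that the induced character $\operatorname{Ind}_H^G\varphi$ contains $\chi$ (i.e. $\langle \operatorname{Ind}_H^G\varphi,\chi\rangle\neq 0$) and does not contain $\psi$ (i.e. $\langle \operatorname{Ind}_H^G\varphi,\psi\rangle=0$), where $\langle\,,\rangle$ is the usual inner product of class functions. *)

theory Defs
  imports "HOL-Algebra.Coset" "Jordan_Normal_Form.Matrix"
begin

definition is_rep :: "('a, 'b) monoid_scheme \<Rightarrow> nat \<Rightarrow> ('a \<Rightarrow> complex mat) \<Rightarrow> bool" where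
  "is_rep G n \<rho> \<longleftrightarrow>
     (\<forall>g \<in> carrier G. \<rho> g \<in> carrier_mat n n) \<and>
     \<rho> \<one>\<^bsub>G\<^esub> = 1\<^sub>m n \<and>
     (\<forall>g \<in> carrier G. \<forall>h \<in> carrier G. \<rho> (g \<otimes>\<^bsub>G\<^esub> h) = \<rho> g * \<rho> h)"

definition is_subspace :: "nat \<Rightarrow> complex vec set \<Rightarrow> bool" where
  "is_subspace n W \<longleftrightarrow> W \<subseteq> carrier_vec n \<and> 0\<^sub>v n \<in> W \<and>
     (\<forall>v \<in> W. \<forall>w \<in> W. v + w \<in> W) \<and> (\<forall>c. \<forall>v \<in> W. c \<cdot>\<^sub>v v \<in> W)"

definition is_irr_rep :: "('a, 'b) monoid_scheme \<Rightarrow> nat \<Rightarrow> ('a \<Rightarrow> complex mat) \<Rightarrow> bool" where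
  "is_irr_rep G n \<rho> \<longleftrightarrow> is_rep G n \<rho> \<and> n > 0 \<and>
     (\<forall>W. is_subspace n W \<and> (\<forall>g \<in> carrier G. \<forall>w \<in> W. \<rho> g *\<^sub>v w \<in> W)
          \<longrightarrow> W = {0\<^sub>v n} \<or> W = carrier_vec n)"

definition character_of :: "('a, 'b) monoid_scheme \<Rightarrow> nat \<Rightarrow> ('a \<Rightarrow> complex mat) \<Rightarrow> 'a \<Rightarrow> complex" where
  "character_of G n \<rho> g = (if g \<in> carrier G then (\<Sum>i<n. \<rho> g $$ (i, i)) else 0)"

definition irr_chars :: "('a, 'b) monoid_scheme \<Rightarrow> ('a \<Rightarrow> complex) set" where
  "irr_chars G = {character_of G n \<rho> | n \<rho>. is_irr_rep G n \<rho>}"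

definition linear_char :: "('a, 'b) monoid_scheme \<Rightarrow> 'a set \<Rightarrow> ('a \<Rightarrow> complex) \<Rightarrow> bool" where
  "linear_char G H \<phi> \<longleftrightarrow> (\<forall>x \<in> H. \<phi> x \<noteq> 0) \<and>
     (\<forall>x \<in> H. \<forall>y \<in> H. \<phi> (x \<otimes>\<^bsub>G\<^esub> y) = \<phi> x * \<phi> y)"

definition induced :: "('a, 'b) monoid_scheme \<Rightarrow> 'a set \<Rightarrow> ('a \<Rightarrow> complex) \<Rightarrow> 'a \<Rightarrow> complex" where
  "induced G H \<phi> g =
     (if g \<in> carrier G then
        (\<Sum>x \<in> carrier G. (if x \<otimes>\<^bsub>G\<^esub> g \<otimes>\<^bsub>G\<^esub> inv\<^bsub>G\<^esub> x \<in> H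
                            then \<phi> (x \<otimes>\<^bsub>G\<^esub> g \<otimes>\<^bsub>G\<^esub> inv\<^bsub>G\<^esub> x) else 0)) / of_nat (card H)
      else 0)"

definition cf_inner :: "('a, 'b) monoid_scheme \<Rightarrow> ('a \<Rightarrow> complex) \<Rightarrow> ('a \<Rightarrow> complex) \<Rightarrow> complex" where
  "cf_inner G f g = (\<Sum>x \<in> carrier G. f x * cnj (g x)) / of_nat (card (carrier G))"

definition almost_monomial :: "('a, 'b) monoid_scheme \<Rightarrow> bool" where
  "almost_monomial G \<longleftrightarrow>
     (\<forall>\<chi> \<in> irr_chars G. \<forall>\<psi> \<in> irr_chars G. \<chi> \<noteq> \<psi> \<longrightarrow>
        (\<exists>H \<phi>. subgroup H G \<and> linear_char G H \<phi> \<and>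
               cf_inner G (induced G H \<phi>) \<chi> \<noteq> 0 \<and> cf_inner G (induced G H \<phi>) \<psi> = 0))"

end

theory Submission imports Defs begin

lemma tr_comm:
  fixes A B :: "complex mat"
  assumes "A \<in> carrier_mat n n" "B \<in> carrier_mat n n"
  shows "(\<Sum>i<n. (A*B)$$(i,i)) = (\<Sum>i<n. (B*A)$$(i,i))"
proof -
  have "(\<Sum>i<n. (A*B)$$(i,i)) = (\<Sum>i<n. \<Sum>k<n. A$$(i,k) * B$$(k,i))"
    using assms by (intro sum.cong refl) (auto simp: scalar_prod_def lessThan_atLeast0 intro!: sum.cong)
  also have "\<dots> = (\<Sum>k<n. \<Sum>i<n. B$$(k,i) * A$$(i,k))"
    by (subst sum.swap) (simp add: mult.commute)
  also have "\<dots> = (\<Sum>i<n. (B*A)$$(i,i))"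
    using assms by (intro sum.cong refl) (auto simp: scalar_prod_def lessThan_atLeast0 intro!: sum.cong)
  finally show ?thesis .
qed

lemma char_conj:
  fixes G (structure)
  assumes G: "group G" and r: "is_rep G n \<rho>" and x: "x \<in> carrier G" and y: "y \<in> carrier G"
  shows "character_of G n \<rho> (x \<otimes>\<^bsub>G\<^esub> y \<otimes>\<^bsub>G\<^esub> inv\<^bsub>G\<^esub> x) = character_of G n \<rho> y"
proof -
  interpret group G by fact
  have c: "\<And>g. g \<in> carrier G \<Longrightarrow> \<rho> g \<in> carrier_mat n n" using r by (simp add: is_rep_def)
  have m: "\<And>g h. g \<in> carrier G \<Longrightarrow> h \<in> carrier G \<Longrightarrow> \<rho> (g \<otimes> h) = \<rho> g * \<rho> h" using r by (simp add: is_rep_def)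
  have one: "\<rho> \<one> = 1\<^sub>m n" using r by (simp add: is_rep_def)
  let ?A = "\<rho> x" let ?B = "\<rho> y" let ?C = "\<rho> (inv x)"
  have e: "\<rho> (x \<otimes> y \<otimes> inv x) = ?A * ?B * ?C" using x y by (simp add: m)
  have CA: "?C * ?A = 1\<^sub>m n" using x by (simp flip: m add: one)
  have "(\<Sum>i<n. (?A * ?B * ?C)$$(i,i)) = (\<Sum>i<n. (?C * (?A * ?B))$$(i,i))"
    using x y c by (intro tr_comm) (auto intro!: mult_carrier_mat)
  also have "?C * (?A * ?B) = (?C * ?A) * ?B" using x y c
    by (metis assoc_mult_mat inv_closed)
  also have "\<dots> = ?B" using CA left_mult_one_mat[OF c[OF y]] by simp
  finally show ?thesis using x y e by (simp add: character_of_def)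
qed

lemma conj_bij:
  fixes G (structure)
  assumes "group G" "x \<in> carrier G"
  shows "bij_betw (\<lambda>g. x \<otimes> g \<otimes> inv x) (carrier G) (carrier G)"
proof -
  interpret group G by fact
  show ?thesis
  proof (rule bij_betwI[where g="\<lambda>y. inv x \<otimes> y \<otimes> x"])
    show "(\<lambda>g. x \<otimes> g \<otimes> inv x) \<in> carrier G \<rightarrow> carrier G" using assms by auto
    show "(\<lambda>y. inv x \<otimes> y \<otimes> x) \<in> carrier G \<rightarrow> carrier G" using assms by auto
    show "inv x \<otimes> (x \<otimes> g \<otimes> inv x) \<otimes> x = g" if "g \<in> carrier G" for g
      using assms that by (simp add: m_assoc flip: m_assoc[of "inv x" x g])
    show "x \<otimes> (inv x \<otimes> y \<otimes> x) \<otimes> inv x = y" if "y \<in> carrier G" for y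
      using assms that by (simp add: m_assoc flip: m_assoc[of x "inv x" y])
  qed
qed

lemma frob:
  fixes G (structure)
  assumes G: "group G" and fin: "finite (carrier G)" and H: "subgroup H G" and r: "is_rep G n \<rho>"
  shows "cf_inner G (induced G H \<phi>) (character_of G n \<rho>) =
         (\<Sum>y\<in>H. \<phi> y * cnj (character_of G n \<rho> y)) / of_nat (card H)"
proof -
  interpret group G by fact
  define \<chi> where "\<chi> = character_of G n \<rho>"
  define k where "k y = (if y \<in> H then \<phi> y * cnj (\<chi> y) else 0)" for y
  define T where "T = (\<Sum>y\<in>H. \<phi> y * cnj (\<chi> y))"
  have HG: "H \<subseteq> carrier G" using H by (rule subgroup.subset)
  have kT: "(\<Sum>y\<in>carrier G. k y) = T"
    unfolding k_def T_def using fin HG by (simp add: sum.If_cases Int_absorb1)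
  have inner: "(\<Sum>g\<in>carrier G. (if x \<otimes> g \<otimes> inv x \<in> H then \<phi> (x \<otimes> g \<otimes> inv x) else 0) * cnj (\<chi> g)) = T"
    if x: "x \<in> carrier G" for x
  proof -
    have "(\<Sum>g\<in>carrier G. (if x \<otimes> g \<otimes> inv x \<in> H then \<phi> (x \<otimes> g \<otimes> inv x) else 0) * cnj (\<chi> g))
        = (\<Sum>g\<in>carrier G. k (x \<otimes> g \<otimes> inv x))"
      using x by (intro sum.cong refl) (simp add: k_def \<chi>_def char_conj[OF G r])
    also have "\<dots> = (\<Sum>y\<in>carrier G. k y)"
      using sum.reindex_bij_betw[OF conj_bij[OF G x], of k] by simp
    finally show ?thesis using kT by simp
  qed
  have "(\<Sum>g\<in>carrier G. induced G H \<phi> g * cnj (\<chi> g))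
      = (\<Sum>g\<in>carrier G. \<Sum>x\<in>carrier G. (if x \<otimes> g \<otimes> inv x \<in> H then \<phi> (x \<otimes> g \<otimes> inv x) else 0) * cnj (\<chi> g) / of_nat (card H))"
    by (intro sum.cong refl) (simp add: induced_def sum_divide_distrib sum_distrib_right)
  also have "\<dots> = (\<Sum>x\<in>carrier G. (\<Sum>g\<in>carrier G. (if x \<otimes> g \<otimes> inv x \<in> H then \<phi> (x \<otimes> g \<otimes> inv x) else 0) * cnj (\<chi> g)) / of_nat (card H))"
    by (subst sum.swap) (simp add: sum_divide_distrib)
  also have "\<dots> = (\<Sum>x\<in>carrier G. T / of_nat (card H))"
    by (intro sum.cong refl) (simp add: inner)
  also have "\<dots> = of_nat (card (carrier G)) * T / of_nat (card H)" by simp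
  finally have "(\<Sum>g\<in>carrier G. induced G H \<phi> g * cnj (\<chi> g)) = of_nat (card (carrier G)) * T / of_nat (card H)" .
  moreover have "card (carrier G) \<noteq> 0" using fin one_closed by (auto simp: card_eq_0_iff)
  ultimately show ?thesis unfolding cf_inner_def T_def \<chi>_def[symmetric] by simp
qed


lemma (in normal) infl_char:
  "character_of G n (\<lambda>g. \<rho> (H #> g)) g = (if g \<in> carrier G then character_of (G Mod H) n \<rho> (H #> g) else 0)"
  by (simp add: character_of_def FactGroup_def rcosetsI subset)

lemma (in normal) infl_rep:
  assumes "is_rep (G Mod H) n \<rho>"
  shows "is_rep G n (\<lambda>g. \<rho> (H #> g))"
  using assms unfolding is_rep_def
  apply (simp add: FactGroup_def rcosetsI subset)
  by (metis rcos_sum rcosetsI subset)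

lemma (in normal) infl_irr:
  assumes "is_irr_rep (G Mod H) n \<rho>"
  shows "is_irr_rep G n (\<lambda>g. \<rho> (H #> g))"
proof -
  have r: "is_rep (G Mod H) n \<rho>" and n: "n > 0" and irr:
    "\<And>W. is_subspace n W \<Longrightarrow> (\<forall>C \<in> carrier (G Mod H). \<forall>w \<in> W. \<rho> C *\<^sub>v w \<in> W) \<Longrightarrow> W = {0\<^sub>v n} \<or> W = carrier_vec n"
    using assms unfolding is_irr_rep_def by blast+
  show ?thesis unfolding is_irr_rep_def
  proof (intro conjI allI impI)
    show "is_rep G n (\<lambda>g. \<rho> (H #> g))" using infl_rep[OF r] .
    show "n > 0" by fact
    fix W assume W: "is_subspace n W \<and> (\<forall>g\<in>carrier G. \<forall>w\<in>W. \<rho> (H #> g) *\<^sub>v w \<in> W)"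
    have "\<forall>C \<in> carrier (G Mod H). \<forall>w \<in> W. \<rho> C *\<^sub>v w \<in> W"
      using W by (auto simp: carrier_FactGroup)
    then show "W = {0\<^sub>v n} \<or> W = carrier_vec n" using irr W by blast
  qed
qed

lemma (in normal) infl_irr_chars:
  assumes "\<chi> \<in> irr_chars (G Mod H)"
  shows "(\<lambda>g. if g \<in> carrier G then \<chi> (H #> g) else 0) \<in> irr_chars G"
proof -
  obtain n \<rho> where "\<chi> = character_of (G Mod H) n \<rho>" "is_irr_rep (G Mod H) n \<rho>"
    using assms unfolding irr_chars_def by blast
  then show ?thesis unfolding irr_chars_def
    using infl_irr infl_char by (auto intro!: exI[of _ n] exI[of _ "\<lambda>g. \<rho> (H #> g)"])
qed

lemma (in normal) coset_k:
  assumes "y \<in> carrier G" "k \<in> H"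
  shows "H #> (y \<otimes> k) = H #> y"
proof -
  interpret Q: group "G Mod H" by (rule factorgroup_is_group)
  have "H #> (y \<otimes> k) = (H #> y) <#> (H #> k)" using assms subset by (simp add: rcos_sum)
  also have "H #> k = H" using assms by (simp add: coset_join2 subgroup_axioms subset)
  also have "(H #> y) <#> H = H #> y"
    using Q.r_one[of "H #> y"] assms by (simp add: FactGroup_def rcosetsI subset)
  finally show ?thesis .
qed


lemma (in group) rmult_bij:
  assumes K: "subgroup K G" and k: "k \<in> K"
  shows "bij_betw (\<lambda>y. y \<otimes> k) K K"
proof (rule bij_betwI[where g="\<lambda>y. y \<otimes> inv k"])
  have KG: "K \<subseteq> carrier G" using K by (rule subgroup.subset)
  have kG: "k \<in> carrier G" using k KG by blast
  show "(\<lambda>y. y \<otimes> k) \<in> K \<rightarrow> K" using K k by (auto intro: subgroup.m_closed)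
  show "(\<lambda>y. y \<otimes> inv k) \<in> K \<rightarrow> K" using K k by (auto intro: subgroup.m_closed subgroup.m_inv_closed)
  show "y \<otimes> k \<otimes> inv k = y" if "y \<in> K" for y using that KG kG by (auto simp: m_assoc)
  show "y \<otimes> inv k \<otimes> k = y" if "y \<in> K" for y using that KG kG by (auto simp: m_assoc)
qed

lemma (in normal) triv:
  assumes K: "subgroup K G" and lin: "linear_char G K \<phi>"
    and S: "(\<Sum>y\<in>K. \<phi> y * cnj (character_of G d (\<lambda>g. \<tau> (H #> g)) y)) \<noteq> 0"
    and k: "k \<in> K" "k \<in> H"
  shows "\<phi> k = 1"
proof -
  define \<chi> where "\<chi> = character_of G d (\<lambda>g. \<tau> (H #> g))"
  define f where "f y = \<phi> y * cnj (\<chi> y)" for y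
  have KG: "K \<subseteq> carrier G" using K by (rule subgroup.subset)
  have "(\<Sum>y\<in>K. f y) = (\<Sum>y\<in>K. f (y \<otimes> k))"
    using sum.reindex_bij_betw[OF rmult_bij[OF K k(1)], of f] by simp
  also have "\<dots> = (\<Sum>y\<in>K. \<phi> k * f y)"
  proof (intro sum.cong refl)
    fix y assume y: "y \<in> K"
    have yG: "y \<in> carrier G" using y KG by blast
    have "\<chi> (y \<otimes> k) = \<chi> y"
      using yG k KG unfolding \<chi>_def infl_char by (auto simp: coset_k)
    moreover have "\<phi> (y \<otimes> k) = \<phi> y * \<phi> k" using lin y k unfolding linear_char_def by blast
    ultimately show "f (y \<otimes> k) = \<phi> k * f y" unfolding f_def by simp
  qed
  also have "\<dots> = \<phi> k * (\<Sum>y\<in>K. f y)" by (simp add: sum_distrib_left)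
  finally have "(1 - \<phi> k) * (\<Sum>y\<in>K. f y) = 0" by (simp add: algebra_simps)
  moreover have "(\<Sum>y\<in>K. f y) \<noteq> 0" using S unfolding f_def \<chi>_def .
  ultimately show ?thesis by simp
qed

definition desc :: "('a, 'b) monoid_scheme \<Rightarrow> 'a set \<Rightarrow> 'a set \<Rightarrow> ('a \<Rightarrow> complex) \<Rightarrow> 'a set \<Rightarrow> complex" where
  "desc G N K \<phi> C = \<phi> (SOME h. h \<in> K \<and> C = r_coset G N h)"

lemma (in normal) desc_eq:
  assumes K: "subgroup K G" and lin: "linear_char G K \<phi>"
    and tr: "\<forall>k\<in>K \<inter> H. \<phi> k = 1" and y: "y \<in> K"
  shows "desc G H K \<phi> (H #> y) = \<phi> y"
proof -
  have KG: "K \<subseteq> carrier G" using K by (rule subgroup.subset)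
  define h where "h = (SOME h. h \<in> K \<and> H #> y = H #> h)"
  have "\<exists>h. h \<in> K \<and> H #> y = H #> h" using y by blast
  then have h: "h \<in> K" "H #> y = H #> h" unfolding h_def by (metis (mono_tags, lifting) someI_ex)+
  have yG: "y \<in> carrier G" and hG: "h \<in> carrier G" using y h KG by blast+
  have "h \<in> H #> y" using h hG by (simp add: rcos_self subgroup_axioms)
  then have hH: "h \<otimes> inv y \<in> H" using rcos_module_imp[OF is_group yG] by blast
  have hK: "h \<otimes> inv y \<in> K" using K h y by (auto intro: subgroup.m_closed subgroup.m_inv_closed)
  have "\<phi> h = \<phi> ((h \<otimes> inv y) \<otimes> y)" using yG hG by (simp add: m_assoc)
  also have "\<dots> = \<phi> (h \<otimes> inv y) * \<phi> y" using lin hK y unfolding linear_char_def by blast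
  also have "\<dots> = \<phi> y" using tr hH hK by simp
  finally show ?thesis unfolding desc_def h_def[symmetric] by simp
qed

lemma (in normal) desc_lin:
  assumes K: "subgroup K G" and lin: "linear_char G K \<phi>"
    and tr: "\<forall>k\<in>K \<inter> H. \<phi> k = 1"
  shows "linear_char (G Mod H) ((\<lambda>g. H #> g) ` K) (desc G H K \<phi>)"
proof -
  have KG: "K \<subseteq> carrier G" using K by (rule subgroup.subset)
  show ?thesis unfolding linear_char_def
  proof (intro conjI ballI)
    fix C assume "C \<in> (\<lambda>g. H #> g) ` K"
    then obtain y where y: "y \<in> K" "C = H #> y" by blast
    show "desc G H K \<phi> C \<noteq> 0" using desc_eq[OF K lin tr y(1)] y lin unfolding linear_char_def by simp
  next
    fix C D assume "C \<in> (\<lambda>g. H #> g) ` K" "D \<in> (\<lambda>g. H #> g) ` K"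
    then obtain y z where y: "y \<in> K" "C = H #> y" and z: "z \<in> K" "D = H #> z" by blast
    have yz: "y \<otimes> z \<in> K" using K y z by (auto intro: subgroup.m_closed)
    have "C \<otimes>\<^bsub>G Mod H\<^esub> D = H #> (y \<otimes> z)" using y z KG by (simp add: rcos_sum subsetD)
    then show "desc G H K \<phi> (C \<otimes>\<^bsub>G Mod H\<^esub> D) = desc G H K \<phi> C * desc G H K \<phi> D"
      using desc_eq[OF K lin tr] y z yz lin unfolding linear_char_def by simp
  qed
qed

lemma (in normal) img_subgroup:
  assumes K: "subgroup K G"
  shows "subgroup ((\<lambda>g. H #> g) ` K) (G Mod H)"
proof -
  interpret gh: group_hom G "G Mod H" "\<lambda>g. H #> g"
    by (intro group_hom.intro group_hom_axioms.intro is_group factorgroup_is_group r_coset_hom_Mod)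
  show ?thesis by (rule gh.subgroup_img_is_subgroup[OF K])
qed

lemma (in normal) fiber:
  assumes K: "subgroup K G" and h: "h \<in> K"
  shows "{y. y \<in> K \<and> H #> y = H #> h} = (K \<inter> H) #> h"
proof -
  have KG: "K \<subseteq> carrier G" using K by (rule subgroup.subset)
  have hG: "h \<in> carrier G" using h KG by blast
  show ?thesis
  proof (intro equalityI subsetI)
    fix y assume "y \<in> {y. y \<in> K \<and> H #> y = H #> h}"
    then have y: "y \<in> K" "H #> y = H #> h" by auto
    have yG: "y \<in> carrier G" using y KG by blast
    have "y \<in> H #> h" using y yG by (metis rcos_self subgroup_axioms)
    then have a: "y \<otimes> inv h \<in> H" using rcos_module_imp[OF is_group hG] by blast
    have b: "y \<otimes> inv h \<in> K" using K h y by (auto intro: subgroup.m_closed subgroup.m_inv_closed)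
    have "y = (y \<otimes> inv h) \<otimes> h" using yG hG by (simp add: m_assoc)
    then show "y \<in> (K \<inter> H) #> h" using a b unfolding r_coset_def by blast
  next
    fix y assume "y \<in> (K \<inter> H) #> h"
    then obtain k where k: "k \<in> K" "k \<in> H" "y = k \<otimes> h" unfolding r_coset_def by blast
    have "y \<in> K" using K k h by (auto intro: subgroup.m_closed)
    moreover have "y \<in> H #> h" using k hG subset by (auto intro: rcosI)
    then have "H #> h = H #> y" using hG by (rule repr_independence[OF _ _ subgroup_axioms])
    ultimately show "y \<in> {y. y \<in> K \<and> H #> y = H #> h}" by simp
  qed
qed


lemma (in normal) sum_rel:
  assumes fin: "finite (carrier G)" and K: "subgroup K G" and lin: "linear_char G K \<phi>"
    and tr: "\<forall>k\<in>K \<inter> H. \<phi> k = 1"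
  shows "(\<Sum>y\<in>K. \<phi> y * cnj (if y \<in> carrier G then \<chi> (H #> y) else 0))
       = of_nat (card (K \<inter> H)) * (\<Sum>C\<in>(\<lambda>g. H #> g) ` K. desc G H K \<phi> C * cnj (\<chi> C))"
proof -
  have KG: "K \<subseteq> carrier G" using K by (rule subgroup.subset)
  have finK: "finite K" using fin KG finite_subset by blast
  define F where "F C = desc G H K \<phi> C * cnj (\<chi> C)" for C
  have "(\<Sum>y\<in>K. \<phi> y * cnj (if y \<in> carrier G then \<chi> (H #> y) else 0)) = (\<Sum>y\<in>K. F (H #> y))"
    using KG by (intro sum.cong refl) (auto simp: F_def desc_eq[OF K lin tr])
  also have "\<dots> = (\<Sum>C\<in>(\<lambda>g. H #> g) ` K. \<Sum>y\<in>{y. y \<in> K \<and> H #> y = C}. F (H #> y))"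
    by (rule sum.image_gen[OF finK])
  also have "\<dots> = (\<Sum>C\<in>(\<lambda>g. H #> g) ` K. of_nat (card (K \<inter> H)) * F C)"
  proof (intro sum.cong refl)
    fix C assume "C \<in> (\<lambda>g. H #> g) ` K"
    then obtain h where h: "h \<in> K" "C = H #> h" by blast
    have hG: "h \<in> carrier G" using h KG by blast
    have "(\<Sum>y\<in>{y. y \<in> K \<and> H #> y = C}. F (H #> y)) = (\<Sum>y\<in>{y. y \<in> K \<and> H #> y = C}. F C)"
      by (intro sum.cong refl) auto
    also have "\<dots> = of_nat (card {y. y \<in> K \<and> H #> y = C}) * F C" by simp
    also have "card {y. y \<in> K \<and> H #> y = C} = card (K \<inter> H)"
    proof -
      have fb: "{y. y \<in> K \<and> H #> y = C} = (K \<inter> H) #> h" using fiber[OF K h(1)] h by simp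
      have s: "K \<inter> H \<subseteq> carrier G" using KG by blast
      show ?thesis using card_rcosets_equal[OF rcosetsI[OF s hG] s] fb by simp
    qed
    finally show "(\<Sum>y\<in>{y. y \<in> K \<and> H #> y = C}. F (H #> y)) = of_nat (card (K \<inter> H)) * F C" .
  qed
  finally show ?thesis by (simp add: F_def sum_distrib_left)
qed

lemma (in normal) descend:
  assumes fin: "finite (carrier G)" and K: "subgroup K G" and lin: "linear_char G K \<phi>"
    and rc: "\<chi> \<in> irr_chars (G Mod H)" and rp: "\<psi> \<in> irr_chars (G Mod H)"
    and c1: "cf_inner G (induced G K \<phi>) (\<lambda>g. if g \<in> carrier G then \<chi> (H #> g) else 0) \<noteq> 0"
    and c2: "cf_inner G (induced G K \<phi>) (\<lambda>g. if g \<in> carrier G then \<psi> (H #> g) else 0) = 0"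
  shows "\<exists>K' \<phi>'. subgroup K' (G Mod H) \<and> linear_char (G Mod H) K' \<phi>' \<and>
     cf_inner (G Mod H) (induced (G Mod H) K' \<phi>') \<chi> \<noteq> 0 \<and>
     cf_inner (G Mod H) (induced (G Mod H) K' \<phi>') \<psi> = 0"
proof -
  interpret Q: group "G Mod H" by (rule factorgroup_is_group)
  have finQ: "finite (carrier (G Mod H))" using fin by (simp add: carrier_FactGroup)
  have KG: "K \<subseteq> carrier G" using K by (rule subgroup.subset)
  have finK: "finite K" using fin KG finite_subset by blast
  obtain n \<rho> where \<chi>: "\<chi> = character_of (G Mod H) n \<rho>" "is_irr_rep (G Mod H) n \<rho>"
    using rc unfolding irr_chars_def by blast
  obtain m \<sigma> where \<psi>: "\<psi> = character_of (G Mod H) m \<sigma>" "is_irr_rep (G Mod H) m \<sigma>"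
    using rp unfolding irr_chars_def by blast
  have r\<rho>: "is_rep (G Mod H) n \<rho>" and r\<sigma>: "is_rep (G Mod H) m \<sigma>"
    using \<chi> \<psi> by (auto simp: is_irr_rep_def)
  have e\<chi>: "(\<lambda>g. if g \<in> carrier G then \<chi> (H #> g) else 0) = character_of G n (\<lambda>g. \<rho> (H #> g))"
    using \<chi> by (auto simp: infl_char)
  have e\<psi>: "(\<lambda>g. if g \<in> carrier G then \<psi> (H #> g) else 0) = character_of G m (\<lambda>g. \<sigma> (H #> g))"
    using \<psi> by (auto simp: infl_char)
  define S1 where "S1 = (\<Sum>y\<in>K. \<phi> y * cnj (character_of G n (\<lambda>g. \<rho> (H #> g)) y))"
  define S2 where "S2 = (\<Sum>y\<in>K. \<phi> y * cnj (character_of G m (\<lambda>g. \<sigma> (H #> g)) y))"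
  have f1: "cf_inner G (induced G K \<phi>) (\<lambda>g. if g \<in> carrier G then \<chi> (H #> g) else 0) = S1 / of_nat (card K)"
    unfolding e\<chi> S1_def by (rule frob[OF is_group fin K infl_rep[OF r\<rho>]])
  have f2: "cf_inner G (induced G K \<phi>) (\<lambda>g. if g \<in> carrier G then \<psi> (H #> g) else 0) = S2 / of_nat (card K)"
    unfolding e\<psi> S2_def by (rule frob[OF is_group fin K infl_rep[OF r\<sigma>]])
  have S1: "S1 \<noteq> 0" using c1 f1 by auto
  have tr: "\<forall>k\<in>K \<inter> H. \<phi> k = 1"
    using triv[OF K lin S1[unfolded S1_def]] by blast
  define K' where "K' = (\<lambda>g. H #> g) ` K"
  define \<phi>' where "\<phi>' = desc G H K \<phi>"
  have sK': "subgroup K' (G Mod H)" unfolding K'_def by (rule img_subgroup[OF K])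
  have lK': "linear_char (G Mod H) K' \<phi>'" unfolding K'_def \<phi>'_def by (rule desc_lin[OF K lin tr])
  define T1 where "T1 = (\<Sum>C\<in>K'. \<phi>' C * cnj (\<chi> C))"
  define T2 where "T2 = (\<Sum>C\<in>K'. \<phi>' C * cnj (\<psi> C))"
  have g1: "cf_inner (G Mod H) (induced (G Mod H) K' \<phi>') \<chi> = T1 / of_nat (card K')"
    unfolding T1_def \<chi>(1) by (rule frob[OF Q.is_group finQ sK' r\<rho>])
  have g2: "cf_inner (G Mod H) (induced (G Mod H) K' \<phi>') \<psi> = T2 / of_nat (card K')"
    unfolding T2_def \<psi>(1) by (rule frob[OF Q.is_group finQ sK' r\<sigma>])
  have s1: "S1 = of_nat (card (K \<inter> H)) * T1"
    unfolding S1_def T1_def K'_def \<phi>'_def e\<chi>[symmetric] by (rule sum_rel[OF fin K lin tr])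
  have s2: "S2 = of_nat (card (K \<inter> H)) * T2"
    unfolding S2_def T2_def K'_def \<phi>'_def e\<psi>[symmetric] by (rule sum_rel[OF fin K lin tr])
  have cK: "card K \<noteq> 0" using finK subgroup.one_closed[OF K] by (auto simp: card_eq_0_iff)
  have cK': "card K' \<noteq> 0" using finK subgroup.one_closed[OF K] unfolding K'_def by (auto simp: card_eq_0_iff)
  have T1: "T1 \<noteq> 0" using S1 s1 by auto
  have "S2 = 0" using c2 f2 cK by simp
  moreover have "card (K \<inter> H) \<noteq> 0"
    using finK subgroup.one_closed[OF K] one_closed by (auto simp: card_eq_0_iff)
  ultimately have T2: "T2 = 0" using s2 by simp
  show ?thesis
    using sK' lK' g1 g2 T1 T2 cK' by (intro exI[of _ K'] exI[of _ \<phi>']) simp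
qed


lemma irr_chars_zero:
  assumes "\<chi> \<in> irr_chars G" "C \<notin> carrier G"
  shows "\<chi> C = 0"
  using assms unfolding irr_chars_def character_of_def by auto

theorem theorem2p2:
  fixes G :: "('a, 'b) monoid_scheme" and N :: "'a set"
  assumes "group G" and "finite (carrier G)" and "N \<lhd> G"
    and "almost_monomial G"
  shows "almost_monomial (G Mod N)"
proof -
  interpret normal N G by (rule assms(3))
  show ?thesis unfolding almost_monomial_def
  proof (intro ballI impI)
    fix \<chi> \<psi> assume c: "\<chi> \<in> irr_chars (G Mod N)" and p: "\<psi> \<in> irr_chars (G Mod N)" and ne: "\<chi> \<noteq> \<psi>"
    define \<chi>' where "\<chi>' = (\<lambda>g. if g \<in> carrier G then \<chi> (N #>\<^bsub>G\<^esub> g) else 0)"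
    define \<psi>' where "\<psi>' = (\<lambda>g. if g \<in> carrier G then \<psi> (N #>\<^bsub>G\<^esub> g) else 0)"
    have c': "\<chi>' \<in> irr_chars G" unfolding \<chi>'_def by (rule infl_irr_chars[OF c])
    have p': "\<psi>' \<in> irr_chars G" unfolding \<psi>'_def by (rule infl_irr_chars[OF p])
    have ne': "\<chi>' \<noteq> \<psi>'"
    proof
      assume eq: "\<chi>' = \<psi>'"
      have "\<chi> = \<psi>"
      proof
        fix C show "\<chi> C = \<psi> C"
        proof (cases "C \<in> carrier (G Mod N)")
          case True
          then obtain g where g: "g \<in> carrier G" "C = N #>\<^bsub>G\<^esub> g" by (auto simp: carrier_FactGroup)
          then show ?thesis using fun_cong[OF eq, of g] unfolding \<chi>'_def \<psi>'_def by simp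
        next
          case False
          then show ?thesis using irr_chars_zero c p by metis
        qed
      qed
      then show False using ne by simp
    qed
    obtain K \<phi> where K: "subgroup K G" "linear_char G K \<phi>"
      "cf_inner G (induced G K \<phi>) \<chi>' \<noteq> 0" "cf_inner G (induced G K \<phi>) \<psi>' = 0"
      using assms(4) c' p' ne' unfolding almost_monomial_def by blast
    show "\<exists>H \<phi>. subgroup H (G Mod N) \<and> linear_char (G Mod N) H \<phi> \<and>
             cf_inner (G Mod N) (induced (G Mod N) H \<phi>) \<chi> \<noteq> 0 \<and>
             cf_inner (G Mod N) (induced (G Mod N) H \<phi>) \<psi> = 0"
      by (rule descend[OF assms(2) K(1,2) c p K(3,4)[unfolded \<chi>'_def \<psi>'_def]])
  qed
qed

end
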